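(* Let $p$ be an odd prime and $P$ a finite $p$-group of class $2$ and exponent $p$. (i) There are subgroups $Q$ and $A$ of $P$ such that $Z(Q)=Q'=P'$, $A\le Z(P)$ and $P=Q\times A$. (ii) Let $Q,R\le P$ satisfy $Z(Q)=Q'=P'=R'=Z(R)$ and $P=QZ(P)=RZ(P)$. If $A\le Z(P)$ is such that $P=Q\times A$, then also $P=R\times A$. Furthermore, there is an upper central automorphism of $P$ sending $Q$ to $R$ and acting as the identity on $Z(P)$.
   Context: An automorphism $\varphi$ of $P$ is upper central if $Z(P)x\varphi=Z(P)x$ for all $x\in P$. $P'$ denotes the commutator subgroup and $Z(\cdot)$ the center. *)

theory Defs
  imports "HOL-Algebra.Algebra"
begin

definition centre :: "('a, 'b) monoid_scheme \<Rightarrow> 'a set \<Rightarrow> 'a set" where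
  "centre G H = {z \<in> H. \<forall>h \<in> H. z \<otimes>\<^bsub>G\<^esub> h = h \<otimes>\<^bsub>G\<^esub> z}"

definition p_group :: "nat \<Rightarrow> ('a, 'b) monoid_scheme \<Rightarrow> bool" where
  "p_group p G \<longleftrightarrow> group G \<and> finite (carrier G) \<and> (\<exists>n. order G = p ^ n)"

text \<open>Exponent p: every element satisfies x^p = 1 (for p prime and G nontrivial this is exponent exactly p).\<close>
definition has_exponent :: "nat \<Rightarrow> ('a, 'b) monoid_scheme \<Rightarrow> bool" where
  "has_exponent e G \<longleftrightarrow> (\<forall>x \<in> carrier G. x [^]\<^bsub>G\<^esub> e = \<one>\<^bsub>G\<^esub>)"

text \<open>Nilpotency class exactly 2: gamma_2 = G' is nontrivial and gamma_3 = [G',G] = 1,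
  i.e. G' is a nontrivial subgroup of Z(G).\<close>
definition nilpotent_class_2 :: "('a, 'b) monoid_scheme \<Rightarrow> bool" where
  "nilpotent_class_2 G \<longleftrightarrow>
     derived G (carrier G) \<noteq> {\<one>\<^bsub>G\<^esub>} \<and> derived G (carrier G) \<subseteq> centre G (carrier G)"

definition internal_direct_product :: "('a, 'b) monoid_scheme \<Rightarrow> 'a set \<Rightarrow> 'a set \<Rightarrow> bool" where
  "internal_direct_product G Q A \<longleftrightarrow>
     Q \<lhd> G \<and> A \<lhd> G \<and> Q <#>\<^bsub>G\<^esub> A = carrier G \<and> Q \<inter> A = {\<one>\<^bsub>G\<^esub>}"

definition upper_central_aut :: "('a, 'b) monoid_scheme \<Rightarrow> ('a \<Rightarrow> 'a) \<Rightarrow> bool" where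
  "upper_central_aut G \<phi> \<longleftrightarrow> \<phi> \<in> iso G G \<and>
     (\<forall>x \<in> carrier G. \<phi> ` (centre G (carrier G) #>\<^bsub>G\<^esub> x) = centre G (carrier G) #>\<^bsub>G\<^esub> x)"

end

theory Submission imports Defs begin

context group begin

lemma inv_cl [simp]: "x \<in> carrier G \<Longrightarrow> y \<in> carrier G \<Longrightarrow> inv x \<otimes> (x \<otimes> y) = y"
  by (simp add: m_assoc[symmetric])
lemma inv_cl2 [simp]: "x \<in> carrier G \<Longrightarrow> y \<in> carrier G \<Longrightarrow> x \<otimes> (inv x \<otimes> y) = y"
  by (simp add: m_assoc[symmetric])

abbreviation "ZZ \<equiv> centre G (carrier G)"

lemma cmem: "z \<in> ZZ \<Longrightarrow> z \<in> carrier G"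
  unfolding centre_def by auto

lemma ccomm: "z \<in> ZZ \<Longrightarrow> h \<in> carrier G \<Longrightarrow> z \<otimes> h = h \<otimes> z"
  unfolding centre_def by auto

lemma clcomm: "z \<in> ZZ \<Longrightarrow> h \<in> carrier G \<Longrightarrow> w \<in> carrier G \<Longrightarrow> z \<otimes> (h \<otimes> w) = h \<otimes> (z \<otimes> w)"
proof -
  assume a: "z \<in> ZZ" "h \<in> carrier G" "w \<in> carrier G"
  have "z \<otimes> (h \<otimes> w) = (z \<otimes> h) \<otimes> w" using a cmem[OF a(1)] by (simp add: m_assoc)
  also have "\<dots> = (h \<otimes> z) \<otimes> w" using ccomm[OF a(1) a(2)] by simp
  also have "\<dots> = h \<otimes> (z \<otimes> w)" using a cmem[OF a(1)] by (simp add: m_assoc)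
  finally show ?thesis .
qed

lemma centre_subgroup: "subgroup ZZ G"
proof (rule subgroupI)
  show "ZZ \<subseteq> carrier G" using cmem by auto
  show "ZZ \<noteq> {}" unfolding centre_def by (auto intro!: exI[of _ \<one>])
next
  fix a assume a: "a \<in> ZZ"
  have "\<And>h. h \<in> carrier G \<Longrightarrow> inv a \<otimes> h = h \<otimes> inv a"
  proof -
    fix h assume h: "h \<in> carrier G"
    have ac: "a \<in> carrier G" using cmem[OF a] .
    have e: "a \<otimes> h = h \<otimes> a" using ccomm[OF a h] .
    have "h \<otimes> inv a = inv a \<otimes> (a \<otimes> h) \<otimes> inv a" using ac h by (simp add: m_assoc)
    also have "\<dots> = inv a \<otimes> (h \<otimes> a) \<otimes> inv a" using e by simp
    also have "\<dots> = inv a \<otimes> h" using ac h by (simp add: m_assoc)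
    finally show "inv a \<otimes> h = h \<otimes> inv a" by simp
  qed
  thus "inv a \<in> ZZ" using cmem[OF a] unfolding centre_def by auto
next
  fix a b assume a: "a \<in> ZZ" and b: "b \<in> ZZ"
  show "a \<otimes> b \<in> ZZ" unfolding centre_def
    using cmem[OF a] cmem[OF b] ccomm[OF a] ccomm[OF b]
  proof (intro CollectI conjI ballI)
    show "a \<otimes> b \<in> carrier G" using cmem[OF a] cmem[OF b] by simp
    fix h assume h: "h \<in> carrier G"
    have "a \<otimes> b \<otimes> h = a \<otimes> (b \<otimes> h)" using cmem[OF a] cmem[OF b] h by (simp add: m_assoc)
    also have "\<dots> = a \<otimes> (h \<otimes> b)" using ccomm[OF b h] by simp
    also have "\<dots> = (a \<otimes> h) \<otimes> b" using cmem[OF a] cmem[OF b] h by (simp add: m_assoc)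
    also have "\<dots> = (h \<otimes> a) \<otimes> b" using ccomm[OF a h] by simp
    also have "\<dots> = h \<otimes> (a \<otimes> b)" using cmem[OF a] cmem[OF b] h by (simp add: m_assoc)
    finally show "a \<otimes> b \<otimes> h = h \<otimes> (a \<otimes> b)" .
  qed
qed

lemma central_normal: "subgroup A G \<Longrightarrow> A \<subseteq> ZZ \<Longrightarrow> A \<lhd> G"
  unfolding normal_inv_iff
proof (intro conjI ballI, assumption)
  fix x h assume A: "subgroup A G" "A \<subseteq> ZZ" and x: "x \<in> carrier G" and h: "h \<in> A"
  have hz: "h \<in> ZZ" using A h by auto
  have "x \<otimes> h = h \<otimes> x" using ccomm[OF hz x] by simp
  hence "x \<otimes> h \<otimes> inv x = h" using x cmem[OF hz] by (simp add: m_assoc)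
  thus "x \<otimes> h \<otimes> inv x \<in> A" using h by simp
qed

lemma comm_in_derived: "x \<in> carrier G \<Longrightarrow> y \<in> carrier G \<Longrightarrow> x \<otimes> y \<otimes> inv x \<otimes> inv y \<in> derived G (carrier G)"
  unfolding derived_def by (rule generate.incl) blast

lemma above_derived_normal:
  assumes H: "subgroup H G" and D: "derived G (carrier G) \<subseteq> H" shows "H \<lhd> G"
proof -
  have "x \<otimes> h \<otimes> inv x \<in> H" if x: "x \<in> carrier G" and h: "h \<in> H" for x h
  proof -
    have hc: "h \<in> carrier G" by (rule subgroup.mem_carrier[OF H h])
    have e: "x \<otimes> h \<otimes> inv x = (x \<otimes> h \<otimes> inv x \<otimes> inv h) \<otimes> h"
      using x hc by (simp add: m_assoc)
    have "x \<otimes> h \<otimes> inv x \<otimes> inv h \<in> H" by (rule subsetD[OF D comm_in_derived[OF x hc]])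
    hence "(x \<otimes> h \<otimes> inv x \<otimes> inv h) \<otimes> h \<in> H" by (rule subgroup.m_closed[OF H _ h])
    thus ?thesis by (rule ssubst[OF e])
  qed
  thus ?thesis unfolding normal_inv_iff using H by simp
qed


lemma subgroup_pow_closed: "subgroup H G \<Longrightarrow> x \<in> H \<Longrightarrow> x [^] (n::nat) \<in> H"
proof (induct n)
  case 0 thus ?case using subgroup.one_closed[OF 0(1)] by simp
next
  case (Suc n)
  have "x [^] Suc n = x [^] n \<otimes> x" by simp
  thus ?case using subgroup.m_closed[OF Suc(2) Suc(1)[OF Suc(2,3)] Suc(3)] by simp
qed

lemma pow_p_eq:
  assumes x: "x \<in> carrier G" and xp: "x [^] (p::nat) = \<one>"
  shows "x [^] (p * j + r) = x [^] r"
proof -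
  have "x [^] (p * j + r) = x [^] (p * j) \<otimes> x [^] r" using x by (simp add: nat_pow_mult)
  also have "x [^] (p * j) = (x [^] p) [^] j" using x by (simp add: nat_pow_pow)
  finally show ?thesis using xp x by simp
qed

lemma ext_step:
  assumes p: "Factorial_Ring.prime (p::nat)" and H: "H \<lhd> G" and K: "K \<lhd> G" and HK: "H \<inter> K = {\<one>}"
    and x: "x \<in> carrier G" and xp: "x [^] p = \<one>" and nx: "x \<notin> H <#> K"
  shows "subgroup {h \<otimes> x [^] (k::nat) | h k. h \<in> H} G \<and> H \<subseteq> {h \<otimes> x [^] (k::nat) | h k. h \<in> H}
     \<and> x \<in> {h \<otimes> x [^] (k::nat) | h k. h \<in> H} \<and> {h \<otimes> x [^] (k::nat) | h k. h \<in> H} \<inter> K = {\<one>}"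
proof -
  define S where "S = {h \<otimes> x [^] (k::nat) | h k. h \<in> H}"
  have Hs: "subgroup H G" using H by (rule normal_imp_subgroup)
  have Ks: "subgroup K G" using K by (rule normal_imp_subgroup)
  have hc: "h \<in> H \<Longrightarrow> h \<in> carrier G" for h by (rule subgroup.mem_carrier[OF Hs])
  have kc: "h \<in> K \<Longrightarrow> h \<in> carrier G" for h by (rule subgroup.mem_carrier[OF Ks])
  have conj: "g \<in> carrier G \<Longrightarrow> h \<in> H \<Longrightarrow> g \<otimes> h \<otimes> inv g \<in> H" for g h
    using H unfolding normal_inv_iff by blast
  have p1: "p \<ge> 1" using p prime_gt_0_nat by (simp add: Suc_leI)
  have invpow: "inv (x [^] k) = x [^] ((p - 1) * k)" for k :: nat
  proof (rule inv_equality)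
    have "(p - 1) * k + k = p * k + 0" using p1 by (simp add: algebra_simps)
    hence "x [^] ((p - 1) * k) \<otimes> x [^] k = x [^] (p * k + 0)" using x by (simp add: nat_pow_mult)
    thus "x [^] ((p - 1) * k) \<otimes> x [^] k = \<one>" using pow_p_eq[OF x xp, of k 0] by simp
  qed (use x in auto)
  have HS: "H \<subseteq> S" unfolding S_def
  proof
    fix h assume h: "h \<in> H"
    have "h = h \<otimes> x [^] (0::nat)" using hc[OF h] by simp
    thus "h \<in> {h \<otimes> x [^] (k::nat) | h k. h \<in> H}" using h by blast
  qed
  have xS: "x \<in> S" unfolding S_def
  proof -
    have "x = \<one> \<otimes> x [^] (1::nat)" using x by simp
    thus "x \<in> {h \<otimes> x [^] (k::nat) | h k. h \<in> H}" using subgroup.one_closed[OF Hs] by blast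
  qed
  have SG: "subgroup S G"
  proof (rule subgroupI)
    show "S \<subseteq> carrier G" unfolding S_def using hc x by auto
    show "S \<noteq> {}" using xS by auto
  next
    fix a assume "a \<in> S"
    then obtain h k where h: "h \<in> H" and a: "a = h \<otimes> x [^] (k::nat)" unfolding S_def by blast
    define m where "m = (p - 1) * k"
    have "inv a = inv (x [^] k) \<otimes> inv h" using a hc[OF h] x by (simp add: inv_mult_group)
    also have "\<dots> = x [^] m \<otimes> inv h" using invpow m_def by simp
    also have "\<dots> = (x [^] m \<otimes> inv h \<otimes> inv (x [^] m)) \<otimes> x [^] m"
      using hc[OF h] x by (simp add: m_assoc)
    finally have "inv a = (x [^] m \<otimes> inv h \<otimes> inv (x [^] m)) \<otimes> x [^] m" .
    moreover have "x [^] m \<otimes> inv h \<otimes> inv (x [^] m) \<in> H"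
      using conj[of "x [^] m" "inv h"] subgroup.m_inv_closed[OF Hs h] x by simp
    ultimately show "inv a \<in> S" unfolding S_def by blast
  next
    fix a b assume "a \<in> S" "b \<in> S"
    then obtain h1 k1 h2 k2 where h1: "h1 \<in> H" and a: "a = h1 \<otimes> x [^] (k1::nat)"
      and h2: "h2 \<in> H" and b: "b = h2 \<otimes> x [^] (k2::nat)" unfolding S_def by blast
    have "a \<otimes> b = (h1 \<otimes> (x [^] k1 \<otimes> h2 \<otimes> inv (x [^] k1))) \<otimes> (x [^] k1 \<otimes> x [^] k2)"
      using a b hc[OF h1] hc[OF h2] x by (simp add: m_assoc)
    also have "x [^] k1 \<otimes> x [^] k2 = x [^] (k1 + k2)" using x by (simp add: nat_pow_mult)
    finally have "a \<otimes> b = (h1 \<otimes> (x [^] k1 \<otimes> h2 \<otimes> inv (x [^] k1))) \<otimes> x [^] (k1 + k2)" .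
    moreover have "h1 \<otimes> (x [^] k1 \<otimes> h2 \<otimes> inv (x [^] k1)) \<in> H"
      using subgroup.m_closed[OF Hs h1 conj[OF _ h2]] x by simp
    ultimately show "a \<otimes> b \<in> S" unfolding S_def by blast
  qed
  have HKs: "subgroup (H <#> K) G"
    by (rule normal_imp_subgroup[OF normal_subgroup_set_mult_closed[OF H K]])
  have SK: "S \<inter> K \<subseteq> {\<one>}"
  proof
    fix s assume "s \<in> S \<inter> K"
    then obtain h k where h: "h \<in> H" and s: "s = h \<otimes> x [^] (k::nat)" and sK: "s \<in> K"
      unfolding S_def by blast
    show "s \<in> {\<one>}"
    proof (cases "p dvd k")
      case True
      then obtain j where "k = p * j" by blast
      hence "x [^] k = \<one>" using pow_p_eq[OF x xp, of j 0] by simp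
      hence "s = h" using s hc[OF h] by simp
      thus ?thesis using h sK HK by blast
    next
      case False
      hence k0: "k \<noteq> 0" by (metis dvd_0_right)
      have "coprime p k" using p False by (simp add: prime_imp_coprime)
      hence g1: "gcd k p = 1" by (simp add: coprime_iff_gcd_eq_1 gcd.commute)
      obtain m j where mj: "k * m = p * j + gcd k p" using bezout_nat[OF k0, of p] by blast
      have e1: "x [^] k = inv h \<otimes> s" using s hc[OF h] x by simp
      have "x [^] k \<in> H <#> K" unfolding e1 set_mult_def
        using subgroup.m_inv_closed[OF Hs h] sK by blast
      hence "(x [^] k) [^] m \<in> H <#> K" by (rule subgroup_pow_closed[OF HKs])
      moreover have "(x [^] k) [^] m = x" using x mj g1 pow_p_eq[OF x xp, of j 1]
        by (simp add: nat_pow_pow)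
      ultimately show ?thesis using nx by simp
    qed
  qed
  have "S \<inter> K = {\<one>}" using SK subgroup.one_closed[OF SG] subgroup.one_closed[OF Ks] by blast
  thus ?thesis using SG HS xS unfolding S_def by blast
qed


lemma comm_central_l:
  assumes x: "x \<in> carrier G" and y: "y \<in> carrier G" and a: "a \<in> ZZ"
  shows "(x \<otimes> a) \<otimes> y \<otimes> inv (x \<otimes> a) \<otimes> inv y = x \<otimes> y \<otimes> inv x \<otimes> inv y"
proof -
  have ac: "a \<in> carrier G" using cmem[OF a] .
  have "(x \<otimes> a) \<otimes> y \<otimes> inv (x \<otimes> a) \<otimes> inv y = x \<otimes> (a \<otimes> (y \<otimes> (inv a \<otimes> (inv x \<otimes> inv y))))"
    using x y ac by (simp add: m_assoc inv_mult_group)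
  also have "a \<otimes> (y \<otimes> (inv a \<otimes> (inv x \<otimes> inv y))) = y \<otimes> (a \<otimes> (inv a \<otimes> (inv x \<otimes> inv y)))"
    by (rule clcomm[OF a y]) (use x y ac in simp)
  also have "a \<otimes> (inv a \<otimes> (inv x \<otimes> inv y)) = inv x \<otimes> inv y" using ac x y by simp
  finally show ?thesis using x y by (simp add: m_assoc)
qed

lemma comm_central_r:
  assumes x: "x \<in> carrier G" and y: "y \<in> carrier G" and b: "b \<in> ZZ"
  shows "x \<otimes> (y \<otimes> b) \<otimes> inv x \<otimes> inv (y \<otimes> b) = x \<otimes> y \<otimes> inv x \<otimes> inv y"
proof -
  have bc: "b \<in> carrier G" using cmem[OF b] .
  have "x \<otimes> (y \<otimes> b) \<otimes> inv x \<otimes> inv (y \<otimes> b) = x \<otimes> (y \<otimes> (b \<otimes> (inv x \<otimes> (inv b \<otimes> inv y))))"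
    using x y bc by (simp add: m_assoc inv_mult_group)
  also have "b \<otimes> (inv x \<otimes> (inv b \<otimes> inv y)) = inv x \<otimes> (b \<otimes> (inv b \<otimes> inv y))"
    by (rule clcomm[OF b]) (use x y bc in simp)+
  also have "b \<otimes> (inv b \<otimes> inv y) = inv y" using bc y by simp
  finally show ?thesis using x y by (simp add: m_assoc)
qed

lemma in_set_mult: "x \<in> H <#> K \<longleftrightarrow> (\<exists>h\<in>H. \<exists>k\<in>K. x = h \<otimes> k)"
  unfolding set_mult_def by blast

lemma cent_lift:
  assumes PQB: "carrier G \<subseteq> Q <#> B" and B: "B \<subseteq> ZZ" and Q: "Q \<subseteq> carrier G"
    and z: "z \<in> centre G Q"
  shows "z \<in> ZZ"
proof -
  have zQ: "z \<in> Q" and zc: "\<And>h. h \<in> Q \<Longrightarrow> z \<otimes> h = h \<otimes> z" using z unfolding centre_def by auto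
  have zcar: "z \<in> carrier G" using zQ Q by auto
  have "z \<otimes> g = g \<otimes> z" if g: "g \<in> carrier G" for g
  proof -
    obtain q b where q: "q \<in> Q" and b: "b \<in> B" and gq: "g = q \<otimes> b" using PQB g in_set_mult by blast
    have qc: "q \<in> carrier G" using q Q by auto
    have bz: "b \<in> ZZ" using b B by auto
    have bc: "b \<in> carrier G" using cmem[OF bz] .
    have "z \<otimes> g = (z \<otimes> q) \<otimes> b" using gq zcar qc bc by (simp add: m_assoc)
    also have "\<dots> = (q \<otimes> z) \<otimes> b" using zc[OF q] by simp
    also have "\<dots> = q \<otimes> (z \<otimes> b)" using zcar qc bc by (simp add: m_assoc)
    also have "\<dots> = q \<otimes> (b \<otimes> z)" using ccomm[OF bz zcar] by simp
    also have "\<dots> = g \<otimes> z" using gq zcar qc bc by (simp add: m_assoc)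
    finally show ?thesis .
  qed
  thus ?thesis unfolding centre_def using zcar by blast
qed


lemma part1:
  assumes p: "Factorial_Ring.prime (p::nat)" and fin: "finite (carrier G)"
    and ex: "\<forall>x\<in>carrier G. x [^] p = \<one>" and DZ: "derived G (carrier G) \<subseteq> ZZ"
  shows "\<exists>Q A. subgroup Q G \<and> subgroup A G \<and> centre G Q = derived G Q \<and>
           derived G Q = derived G (carrier G) \<and> A \<subseteq> ZZ \<and> internal_direct_product G Q A"
proof -
  define D where "D = derived G (carrier G)"
  have Ds: "subgroup D G" unfolding D_def by (rule derived_is_subgroup) simp
  have Dn: "D \<lhd> G" using above_derived_normal[OF Ds] D_def by simp
  have DZ': "D \<subseteq> ZZ" using DZ D_def by simp
  have Zs: "subgroup ZZ G" by (rule centre_subgroup)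
  define F1 where "F1 = {A. subgroup A G \<and> A \<subseteq> ZZ \<and> A \<inter> D = {\<one>}}"
  have "F1 \<subseteq> Pow (carrier G)" unfolding F1_def using subgroup.subset by blast
  hence fF1: "finite F1" using fin by (meson finite_Pow_iff finite_subset)
  have "{\<one>} \<in> F1" unfolding F1_def using triv_subgroup subgroup.one_closed[OF Ds]
      subgroup.one_closed[OF Zs] by auto
  then obtain A where AF: "A \<in> F1" and Amax: "\<And>B. B \<in> F1 \<Longrightarrow> A \<subseteq> B \<Longrightarrow> A = B"
    using finite_has_maximal[OF fF1] by blast
  have As: "subgroup A G" and AZ: "A \<subseteq> ZZ" and AD: "A \<inter> D = {\<one>}" using AF F1_def by auto
  have An: "A \<lhd> G" by (rule central_normal[OF As AZ])
  have ZAD: "z \<in> A <#> D" if z: "z \<in> ZZ" for z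
  proof (rule ccontr)
    assume nz: "z \<notin> A <#> D"
    have zc: "z \<in> carrier G" using cmem[OF z] .
    define S where "S = {h \<otimes> z [^] (k::nat) | h k. h \<in> A}"
    have st: "subgroup S G \<and> A \<subseteq> S \<and> z \<in> S \<and> S \<inter> D = {\<one>}"
      unfolding S_def by (rule ext_step[OF p An Dn AD zc _ nz]) (use ex zc in blast)
    have "S \<subseteq> ZZ"
    proof
      fix s assume "s \<in> S"
      then obtain h k where h: "h \<in> A" and s: "s = h \<otimes> z [^] (k::nat)" unfolding S_def by blast
      show "s \<in> ZZ" unfolding s
        by (rule subgroup.m_closed[OF Zs]) (use h AZ subgroup_pow_closed[OF Zs z] in auto)
    qed
    hence "S \<in> F1" using st unfolding F1_def by blast
    hence "A = S" using Amax st by blast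
    hence "z \<in> A" using st by simp
    moreover have "z = z \<otimes> \<one>" using zc by simp
    ultimately have "z \<in> A <#> D" unfolding in_set_mult using subgroup.one_closed[OF Ds] by blast
    thus False using nz by simp
  qed
  define F2 where "F2 = {Q. subgroup Q G \<and> D \<subseteq> Q \<and> Q \<inter> A = {\<one>}}"
  have "F2 \<subseteq> Pow (carrier G)" unfolding F2_def using subgroup.subset by blast
  hence fF2: "finite F2" using fin by (meson finite_Pow_iff finite_subset)
  have "D \<in> F2" unfolding F2_def using Ds AD by auto
  then obtain Q where QF: "Q \<in> F2" and Qmax: "\<And>B. B \<in> F2 \<Longrightarrow> Q \<subseteq> B \<Longrightarrow> Q = B"
    using finite_has_maximal[OF fF2] by blast
  have Qs: "subgroup Q G" and DQ: "D \<subseteq> Q" and QA: "Q \<inter> A = {\<one>}" using QF F2_def by auto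
  have Qn: "Q \<lhd> G" using above_derived_normal[OF Qs] DQ D_def by simp
  have PQA: "x \<in> Q <#> A" if x: "x \<in> carrier G" for x
  proof (rule ccontr)
    assume nx: "x \<notin> Q <#> A"
    define S where "S = {h \<otimes> x [^] (k::nat) | h k. h \<in> Q}"
    have st: "subgroup S G \<and> Q \<subseteq> S \<and> x \<in> S \<and> S \<inter> A = {\<one>}"
      unfolding S_def by (rule ext_step[OF p Qn An QA x _ nx]) (use ex x in blast)
    hence "S \<in> F2" using DQ unfolding F2_def by blast
    hence "Q = S" using Qmax st by blast
    hence "x \<in> Q" using st by simp
    moreover have "x = x \<otimes> \<one>" using x by simp
    ultimately have "x \<in> Q <#> A" unfolding in_set_mult using subgroup.one_closed[OF As] by blast
    thus False using nx by simp
  qed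
  have Qc: "Q \<subseteq> carrier G" using subgroup.subset[OF Qs] .
  have Ac: "A \<subseteq> carrier G" using subgroup.subset[OF As] .
  have QAeq: "Q <#> A = carrier G"
  proof
    show "Q <#> A \<subseteq> carrier G" using Qc Ac unfolding set_mult_def by auto
    show "carrier G \<subseteq> Q <#> A" using PQA by blast
  qed
  have dQ: "derived G Q = D"
  proof
    show "derived G Q \<subseteq> D" unfolding D_def by (rule mono_derived[OF Qc])
    have dQs: "subgroup (derived G Q) G" by (rule derived_is_subgroup[OF Qc])
    have "derived_set G (carrier G) \<subseteq> derived G Q"
    proof
      fix c assume "c \<in> derived_set G (carrier G)"
      then obtain x y where x: "x \<in> carrier G" and y: "y \<in> carrier G"
        and c: "c = x \<otimes> y \<otimes> inv x \<otimes> inv y" by blast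
      obtain q1 a1 where q1: "q1 \<in> Q" and a1: "a1 \<in> A" and xq: "x = q1 \<otimes> a1"
        using PQA[OF x] in_set_mult by blast
      obtain q2 a2 where q2: "q2 \<in> Q" and a2: "a2 \<in> A" and yq: "y = q2 \<otimes> a2"
        using PQA[OF y] in_set_mult by blast
      have q1c: "q1 \<in> carrier G" and q2c: "q2 \<in> carrier G" using q1 q2 Qc by auto
      have "c = q1 \<otimes> (q2 \<otimes> a2) \<otimes> inv q1 \<otimes> inv (q2 \<otimes> a2)"
        unfolding c xq yq by (rule comm_central_l) (use q1c q2c a1 a2 AZ Ac in auto)
      also have "\<dots> = q1 \<otimes> q2 \<otimes> inv q1 \<otimes> inv q2"
        by (rule comm_central_r) (use q1c q2c a2 AZ in auto)
      finally have "c \<in> derived_set G Q" using q1 q2 by blast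
      thus "c \<in> derived G Q" unfolding derived_def by (rule generate.incl)
    qed
    thus "D \<subseteq> derived G Q" unfolding D_def derived_def[of G "carrier G"]
      by (rule generate_subgroup_incl[OF _ dQs])
  qed
  have cQ: "centre G Q = D"
  proof
    show "centre G Q \<subseteq> D"
    proof
      fix z assume z: "z \<in> centre G Q"
      have zZ: "z \<in> ZZ" by (rule cent_lift[OF _ AZ Qc z]) (use QAeq in simp)
      have zQ: "z \<in> Q" using z unfolding centre_def by simp
      obtain a d where a: "a \<in> A" and d: "d \<in> D" and zad: "z = a \<otimes> d" using ZAD[OF zZ] in_set_mult by blast
      have ac: "a \<in> carrier G" and dc: "d \<in> carrier G" using a d Ac DQ Qc by auto
      have "a = z \<otimes> inv d" using zad ac dc by (simp add: m_assoc)
      moreover have "z \<otimes> inv d \<in> Q" using subgroup.m_closed[OF Qs zQ subgroup.m_inv_closed[OF Qs]] d DQ by blast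
      ultimately have "a \<in> Q \<inter> A" using a by simp
      hence "a = \<one>" using QA by blast
      thus "z \<in> D" using zad dc d by simp
    qed
    show "D \<subseteq> centre G Q"
    proof
      fix d assume d: "d \<in> D"
      have "d \<in> ZZ" using d DZ' by auto
      thus "d \<in> centre G Q" using d DQ Qc unfolding centre_def by auto
    qed
  qed
  have "internal_direct_product G Q A"
    unfolding internal_direct_product_def using Qn An QAeq QA by blast
  thus ?thesis using Qs As cQ dQ AZ D_def by blast
qed


lemma dec_unique:
  assumes H: "subgroup H G" and A: "subgroup A G" and HA: "H \<inter> A = {\<one>}"
    and h1: "h1 \<in> H" and h2: "h2 \<in> H" and a1: "a1 \<in> A" and a2: "a2 \<in> A"
    and e: "h1 \<otimes> a1 = h2 \<otimes> a2"
  shows "h1 = h2 \<and> a1 = a2"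
proof -
  have c1: "h1 \<in> carrier G" "h2 \<in> carrier G" using h1 h2 subgroup.mem_carrier[OF H] by auto
  have c2: "a1 \<in> carrier G" "a2 \<in> carrier G" using a1 a2 subgroup.mem_carrier[OF A] by auto
  have "inv h2 \<otimes> (h1 \<otimes> a1) \<otimes> inv a1 = inv h2 \<otimes> (h2 \<otimes> a2) \<otimes> inv a1" using e by simp
  hence eq: "inv h2 \<otimes> h1 = a2 \<otimes> inv a1" using c1 c2 by (simp add: m_assoc)
  have "inv h2 \<otimes> h1 \<in> H" using subgroup.m_closed[OF H subgroup.m_inv_closed[OF H h2] h1] .
  moreover have "a2 \<otimes> inv a1 \<in> A" using subgroup.m_closed[OF A a2 subgroup.m_inv_closed[OF A a1]] .
  ultimately have "inv h2 \<otimes> h1 = \<one>" using eq HA by auto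
  hence "h2 \<otimes> (inv h2 \<otimes> h1) = h2" using c1 by simp
  hence hh: "h1 = h2" using c1 by simp
  hence "h1 \<otimes> a1 = h1 \<otimes> a2" using e by simp
  hence "a1 = a2" using c1 c2 l_cancel by blast
  thus ?thesis using hh by simp
qed

lemma swap4:
  assumes "h1 \<in> carrier G" "h2 \<in> carrier G" "a1 \<in> ZZ" "a2 \<in> ZZ"
  shows "(h1 \<otimes> a1) \<otimes> (h2 \<otimes> a2) = (h1 \<otimes> h2) \<otimes> (a1 \<otimes> a2)"
proof -
  have c: "a1 \<in> carrier G" "a2 \<in> carrier G" using assms cmem by auto
  have "(h1 \<otimes> a1) \<otimes> (h2 \<otimes> a2) = h1 \<otimes> (a1 \<otimes> (h2 \<otimes> a2))" using assms c by (simp add: m_assoc)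
  also have "a1 \<otimes> (h2 \<otimes> a2) = h2 \<otimes> (a1 \<otimes> a2)" by (rule clcomm) (use assms c in auto)
  finally show ?thesis using assms c by (simp add: m_assoc)
qed

lemma part2:
  assumes Qs: "subgroup Q G" and Rs: "subgroup R G"
    and cQ: "centre G Q = derived G Q" and dQ: "derived G Q = derived G (carrier G)"
    and dR: "derived G (carrier G) = derived G R" and cR: "derived G R = centre G R"
    and RZ: "R <#> ZZ = carrier G"
    and As: "subgroup A G" and AZ: "A \<subseteq> ZZ" and idp: "internal_direct_product G Q A"
  shows "internal_direct_product G R A \<and> (\<exists>\<phi>. upper_central_aut G \<phi> \<and> \<phi> ` Q = R \<and> (\<forall>z \<in> ZZ. \<phi> z = z))"
proof -
  define D where "D = derived G (carrier G)"
  have Qc: "Q \<subseteq> carrier G" using subgroup.subset[OF Qs] .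
  have Rc: "R \<subseteq> carrier G" using subgroup.subset[OF Rs] .
  have Ac: "A \<subseteq> carrier G" using subgroup.subset[OF As] .
  have Zs: "subgroup ZZ G" by (rule centre_subgroup)
  have DQ: "D \<subseteq> Q" using derived_incl[OF subset_refl Qs] dQ D_def by simp
  have DR: "D \<subseteq> R" using derived_incl[OF subset_refl Rs] dR D_def by simp
  have QA: "Q <#> A = carrier G" and QAi: "Q \<inter> A = {\<one>}" using idp unfolding internal_direct_product_def by auto
  have QZD: "q \<in> D" if "q \<in> Q" "q \<in> ZZ" for q
  proof -
    have "q \<in> centre G Q" using that Qc ccomm unfolding centre_def[of G Q] by auto
    thus ?thesis using cQ dQ D_def by simp
  qed
  have RZD: "r \<in> D" if "r \<in> R" "r \<in> ZZ" for r
  proof -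
    have "r \<in> centre G R" using that Rc ccomm unfolding centre_def[of G R] by auto
    thus ?thesis using cR dR D_def by simp
  qed
  have ZDA: "\<exists>d\<in>D. \<exists>a\<in>A. z = d \<otimes> a" if z: "z \<in> ZZ" for z
  proof -
    have zc: "z \<in> carrier G" using cmem[OF z] .
    obtain q a where q: "q \<in> Q" and a: "a \<in> A" and zq: "z = q \<otimes> a" using QA zc in_set_mult by blast
    have qc: "q \<in> carrier G" and ac: "a \<in> carrier G" using q a Qc Ac by auto
    have "q = z \<otimes> inv a" using zq qc ac by (simp add: m_assoc)
    moreover have "z \<otimes> inv a \<in> ZZ" using subgroup.m_closed[OF Zs z subgroup.m_inv_closed[OF Zs]] a AZ by blast
    ultimately have "q \<in> D" using QZD q by simp
    thus ?thesis using a zq by blast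
  qed
  have RA: "R <#> A = carrier G"
  proof
    show "R <#> A \<subseteq> carrier G" using Rc Ac unfolding set_mult_def by auto
    show "carrier G \<subseteq> R <#> A"
    proof
      fix x assume x: "x \<in> carrier G"
      obtain r z where r: "r \<in> R" and z: "z \<in> ZZ" and xr: "x = r \<otimes> z" using RZ x in_set_mult by blast
      obtain d a where d: "d \<in> D" and a: "a \<in> A" and zd: "z = d \<otimes> a" using ZDA[OF z] by blast
      have "x = (r \<otimes> d) \<otimes> a" using xr zd r d a Rc Ac DR by (simp add: m_assoc subsetD)
      moreover have "r \<otimes> d \<in> R" using subgroup.m_closed[OF Rs r] d DR by blast
      ultimately show "x \<in> R <#> A" using a in_set_mult by blast
    qed
  qed
  have RAi: "R \<inter> A = {\<one>}"
  proof
    show "R \<inter> A \<subseteq> {\<one>}"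
    proof
      fix y assume y: "y \<in> R \<inter> A"
      hence "y \<in> D" using RZD AZ by blast
      hence "y \<in> Q \<inter> A" using y DQ by blast
      thus "y \<in> {\<one>}" using QAi by simp
    qed
    show "{\<one>} \<subseteq> R \<inter> A" using subgroup.one_closed[OF Rs] subgroup.one_closed[OF As] by simp
  qed
  have Rn: "R \<lhd> G" using above_derived_normal[OF Rs] DR D_def by simp
  have An: "A \<lhd> G" by (rule central_normal[OF As AZ])
  have idpR: "internal_direct_product G R A" unfolding internal_direct_product_def using Rn An RA RAi by blast
  have decQ: "\<exists>q\<in>Q. \<exists>a\<in>A. x = q \<otimes> a" if "x \<in> carrier G" for x using QA that in_set_mult by blast
  have decR: "\<exists>r\<in>R. \<exists>a\<in>A. x = r \<otimes> a" if "x \<in> carrier G" for x using RA that in_set_mult by blast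
  define pa where "pa x = (THE a. a \<in> A \<and> (\<exists>q\<in>Q. x = q \<otimes> a))" for x
  define pr where "pr x = (THE r. r \<in> R \<and> (\<exists>a\<in>A. x = r \<otimes> a))" for x
  define \<phi> where "\<phi> x = pr x \<otimes> pa x" for x
  have pa_eq: "pa (q \<otimes> a) = a" if q: "q \<in> Q" and a: "a \<in> A" for q a
    unfolding pa_def
  proof (rule the_equality)
    show "a \<in> A \<and> (\<exists>q'\<in>Q. q \<otimes> a = q' \<otimes> a)" using q a by blast
    fix a' assume "a' \<in> A \<and> (\<exists>q'\<in>Q. q \<otimes> a = q' \<otimes> a')"
    thus "a' = a" using dec_unique[OF Qs As QAi q _ a] by blast
  qed
  have pr_eq: "pr (r \<otimes> a) = r" if r: "r \<in> R" and a: "a \<in> A" for r a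
    unfolding pr_def
  proof (rule the_equality)
    show "r \<in> R \<and> (\<exists>a'\<in>A. r \<otimes> a = r \<otimes> a')" using r a by blast
    fix r' assume "r' \<in> R \<and> (\<exists>a'\<in>A. r \<otimes> a = r' \<otimes> a')"
    thus "r' = r" using dec_unique[OF Rs As RAi r _ a] by blast
  qed
  have phi_eq: "\<phi> x = r \<otimes> a" if "q \<in> Q" "a \<in> A" "r \<in> R" "b \<in> A" "x = q \<otimes> a" "x = r \<otimes> b" for x q a r b
    unfolding \<phi>_def using pa_eq[of q a] pr_eq[of r b] that by simp
  have dec2: "\<exists>q a r b. q \<in> Q \<and> a \<in> A \<and> r \<in> R \<and> b \<in> A \<and> x = q \<otimes> a \<and> x = r \<otimes> b"
    if "x \<in> carrier G" for x using decQ[OF that] decR[OF that] by blast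
  have inA: "a \<in> carrier G \<and> a \<in> ZZ" if "a \<in> A" for a using that Ac AZ by auto
  have inQ: "q \<in> carrier G" if "q \<in> Q" for q using that Qc by auto
  have inR: "r \<in> carrier G" if "r \<in> R" for r using that Rc by auto
  have phic: "\<phi> x \<in> carrier G" if x: "x \<in> carrier G" for x
  proof -
    obtain q a r b where d: "q \<in> Q" "a \<in> A" "r \<in> R" "b \<in> A" "x = q \<otimes> a" "x = r \<otimes> b" using dec2[OF x] by blast
    show ?thesis using phi_eq[OF d] inA[OF d(2)] inR[OF d(3)] by simp
  qed
  have phimult: "\<phi> (x \<otimes> y) = \<phi> x \<otimes> \<phi> y" if x: "x \<in> carrier G" and y: "y \<in> carrier G" for x y
  proof -
    obtain q1 a1 r1 b1 where d1: "q1 \<in> Q" "a1 \<in> A" "r1 \<in> R" "b1 \<in> A" "x = q1 \<otimes> a1" "x = r1 \<otimes> b1" using dec2[OF x] by blast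
    obtain q2 a2 r2 b2 where d2: "q2 \<in> Q" "a2 \<in> A" "r2 \<in> R" "b2 \<in> A" "y = q2 \<otimes> a2" "y = r2 \<otimes> b2" using dec2[OF y] by blast
    have e1: "x \<otimes> y = (q1 \<otimes> q2) \<otimes> (a1 \<otimes> a2)" unfolding d1(5) d2(5)
      by (rule swap4) (use d1 d2 inA inQ in auto)
    have e2: "x \<otimes> y = (r1 \<otimes> r2) \<otimes> (b1 \<otimes> b2)" unfolding d1(6) d2(6)
      by (rule swap4) (use d1 d2 inA inR in auto)
    have "\<phi> (x \<otimes> y) = (r1 \<otimes> r2) \<otimes> (a1 \<otimes> a2)"
      by (rule phi_eq[OF _ _ _ _ e1 e2]) (use d1 d2 subgroup.m_closed[OF Qs] subgroup.m_closed[OF Rs] subgroup.m_closed[OF As] in auto)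
    also have "\<dots> = (r1 \<otimes> a1) \<otimes> (r2 \<otimes> a2)"
      by (rule swap4[symmetric]) (use d1 d2 inA inR in auto)
    also have "\<dots> = \<phi> x \<otimes> \<phi> y" using phi_eq[OF d1] phi_eq[OF d2] by simp
    finally show ?thesis .
  qed
  have hom: "\<phi> \<in> hom G G" unfolding hom_def using phic phimult by auto
  have gh: "group_hom G G \<phi>" unfolding group_hom_def group_hom_axioms_def using is_group hom by simp
  have ker: "kernel G G \<phi> = {\<one>}"
  proof
    show "{\<one>} \<subseteq> kernel G G \<phi>" unfolding kernel_def using group_hom.hom_one[OF gh] by simp
    show "kernel G G \<phi> \<subseteq> {\<one>}"
    proof
      fix x assume "x \<in> kernel G G \<phi>"
      hence x: "x \<in> carrier G" and px: "\<phi> x = \<one>" unfolding kernel_def by auto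
      obtain q a r b where d: "q \<in> Q" "a \<in> A" "r \<in> R" "b \<in> A" "x = q \<otimes> a" "x = r \<otimes> b" using dec2[OF x] by blast
      have "r \<otimes> a = \<one>" using trans[OF sym[OF phi_eq[OF d]] px] .
      hence "r \<otimes> a = \<one> \<otimes> \<one>" by simp
      hence "r = \<one> \<and> a = \<one>" using dec_unique[OF Rs As RAi d(3) subgroup.one_closed[OF Rs] d(2) subgroup.one_closed[OF As]] by blast
      hence "x = q" "x = b" using d inQ inA by auto
      hence "x \<in> Q \<inter> A" using d by auto
      thus "x \<in> {\<one>}" using QAi by simp
    qed
  qed
  have inj: "inj_on \<phi> (carrier G)" using group_hom.inj_iff_trivial_ker[OF gh] ker by simp
  have surj: "\<exists>x\<in>carrier G. \<phi> x = y" if y: "y \<in> carrier G" for y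
  proof -
    obtain r b where r: "r \<in> R" and b: "b \<in> A" and yr: "y = r \<otimes> b" using decR[OF y] by blast
    obtain q c where q: "q \<in> Q" and c: "c \<in> A" and rq: "r = q \<otimes> c" using decQ[OF inR[OF r]] by blast
    have qr: "q = r \<otimes> inv c" using rq inQ[OF q] inA[OF c] by (simp add: m_assoc)
    have "q \<otimes> b = r \<otimes> (inv c \<otimes> b)" using qr inR[OF r] inA[OF c] inA[OF b] by (simp add: m_assoc)
    hence "\<phi> (q \<otimes> b) = r \<otimes> b"
      by (intro phi_eq[OF q b r _ refl]) (use subgroup.m_closed[OF As subgroup.m_inv_closed[OF As c] b] in auto)
    moreover have "q \<otimes> b \<in> carrier G" using inQ[OF q] inA[OF b] by simp
    ultimately show ?thesis using yr by blast
  qed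
  have bij: "bij_betw \<phi> (carrier G) (carrier G)"
    unfolding bij_betw_def using inj phic surj by blast
  have iso: "\<phi> \<in> iso G G" unfolding iso_def using hom bij by simp
  have fixZ: "\<phi> z = z" if z: "z \<in> ZZ" for z
  proof -
    obtain d a where d: "d \<in> D" and a: "a \<in> A" and zd: "z = d \<otimes> a" using ZDA[OF z] by blast
    show ?thesis using phi_eq[of d a d a z] d a zd DQ DR by blast
  qed
  have upc: "\<exists>c\<in>ZZ. \<phi> x = c \<otimes> x" if x: "x \<in> carrier G" for x
  proof -
    obtain q a r b where d: "q \<in> Q" "a \<in> A" "r \<in> R" "b \<in> A" "x = q \<otimes> a" "x = r \<otimes> b" using dec2[OF x] by blast
    have ac: "a \<in> carrier G" "a \<in> ZZ" "b \<in> carrier G" "b \<in> ZZ" using inA d by auto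
    have rc: "r \<in> carrier G" using inR d by auto
    have cz: "a \<otimes> inv b \<in> ZZ" using subgroup.m_closed[OF Zs ac(2) subgroup.m_inv_closed[OF Zs ac(4)]] .
    have "(a \<otimes> inv b) \<otimes> x = (a \<otimes> inv b) \<otimes> (r \<otimes> b)" using d by simp
    also have "\<dots> = r \<otimes> ((a \<otimes> inv b) \<otimes> b)" by (rule clcomm[OF cz rc]) (use ac in simp)
    also have "\<dots> = r \<otimes> a" using ac by (simp add: m_assoc)
    also have "\<dots> = \<phi> x" using phi_eq[OF d] by simp
    finally show ?thesis using cz by metis
  qed
  have coset: "\<phi> ` (ZZ #> x) = ZZ #> x" if x: "x \<in> carrier G" for x
  proof -
    obtain c where c: "c \<in> ZZ" and pc: "\<phi> x = c \<otimes> x" using upc[OF x] by blast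
    have cc: "c \<in> carrier G" using cmem[OF c] .
    show ?thesis
    proof
      show "\<phi> ` (ZZ #> x) \<subseteq> ZZ #> x"
      proof
        fix w assume "w \<in> \<phi> ` (ZZ #> x)"
        then obtain z where z: "z \<in> ZZ" and w: "w = \<phi> (z \<otimes> x)" unfolding r_coset_def by blast
        have zc: "z \<in> carrier G" using cmem[OF z] .
        have "w = (z \<otimes> c) \<otimes> x" using w phimult[OF zc x] fixZ[OF z] pc zc cc x by (simp add: m_assoc)
        moreover have "z \<otimes> c \<in> ZZ" using subgroup.m_closed[OF Zs z c] .
        ultimately show "w \<in> ZZ #> x" unfolding r_coset_def by blast
      qed
      show "ZZ #> x \<subseteq> \<phi> ` (ZZ #> x)"
      proof
        fix w assume "w \<in> ZZ #> x"
        then obtain z where z: "z \<in> ZZ" and w: "w = z \<otimes> x" unfolding r_coset_def by blast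
        have zc: "z \<in> carrier G" using cmem[OF z] .
        have z2: "z \<otimes> inv c \<in> ZZ" using subgroup.m_closed[OF Zs z subgroup.m_inv_closed[OF Zs c]] .
        have "\<phi> ((z \<otimes> inv c) \<otimes> x) = (z \<otimes> inv c) \<otimes> (c \<otimes> x)"
          using phimult[OF _ x] fixZ[OF z2] pc zc cc by simp
        also have "\<dots> = w" using w zc cc x by (simp add: m_assoc)
        finally have "w = \<phi> ((z \<otimes> inv c) \<otimes> x)" by simp
        moreover have "(z \<otimes> inv c) \<otimes> x \<in> ZZ #> x" unfolding r_coset_def using z2 by blast
        ultimately show "w \<in> \<phi> ` (ZZ #> x)" by blast
      qed
    qed
  qed
  have img: "\<phi> ` Q = R"
  proof
    show "\<phi> ` Q \<subseteq> R"
    proof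
      fix w assume "w \<in> \<phi> ` Q"
      then obtain q where q: "q \<in> Q" and w: "w = \<phi> q" by blast
      obtain r b where r: "r \<in> R" and b: "b \<in> A" and qr: "q = r \<otimes> b" using decR[OF inQ[OF q]] by blast
      have "\<phi> q = r \<otimes> \<one>"
        by (rule phi_eq[OF q subgroup.one_closed[OF As] r b]) (use qr inQ[OF q] in simp_all)
      thus "w \<in> R" using w r inR[OF r] by simp
    qed
    show "R \<subseteq> \<phi> ` Q"
    proof
      fix r assume r: "r \<in> R"
      obtain q c where q: "q \<in> Q" and c: "c \<in> A" and rq: "r = q \<otimes> c" using decQ[OF inR[OF r]] by blast
      have qr: "q = r \<otimes> inv c" using rq inQ[OF q] inA[OF c] by (simp add: m_assoc)
      have "\<phi> q = r \<otimes> \<one>"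
        by (rule phi_eq[OF q subgroup.one_closed[OF As] r subgroup.m_inv_closed[OF As c]]) (use qr inQ[OF q] in simp_all)
      hence "r = \<phi> q" using inR[OF r] by simp
      thus "r \<in> \<phi> ` Q" using q by blast
    qed
  qed
  have "upper_central_aut G \<phi>" unfolding upper_central_aut_def using iso coset by blast
  thus ?thesis using idpR img fixZ by blast
qed


end

theorem lemma2p3:
  fixes p :: nat and P :: "('a, 'b) monoid_scheme"
  assumes "Factorial_Ring.prime p" and "odd p"
    and "p_group p P"
    and "nilpotent_class_2 P"
    and "has_exponent p P"
  shows "(\<exists>Q A. subgroup Q P \<and> subgroup A P \<and>
            centre P Q = derived P Q \<and> derived P Q = derived P (carrier P) \<and>
            A \<subseteq> centre P (carrier P) \<and> internal_direct_product P Q A)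
       \<and> (\<forall>Q R. subgroup Q P \<and> subgroup R P \<and>
            centre P Q = derived P Q \<and> derived P Q = derived P (carrier P) \<and>
            derived P (carrier P) = derived P R \<and> derived P R = centre P R \<and>
            Q <#>\<^bsub>P\<^esub> centre P (carrier P) = carrier P \<and>
            R <#>\<^bsub>P\<^esub> centre P (carrier P) = carrier P \<longrightarrow>
              (\<forall>A. subgroup A P \<and> A \<subseteq> centre P (carrier P) \<and> internal_direct_product P Q A
                     \<longrightarrow> internal_direct_product P R A)
            \<and> (\<exists>\<phi>. upper_central_aut P \<phi> \<and> \<phi> ` Q = R \<and>
                    (\<forall>z \<in> centre P (carrier P). \<phi> z = z)))"
proof -
  have grp: "group P" and fin: "finite (carrier P)" using assms(3) unfolding p_group_def by auto
  interpret group P by (rule grp)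
  have ex: "\<forall>x\<in>carrier P. x [^]\<^bsub>P\<^esub> p = \<one>\<^bsub>P\<^esub>" using assms(5) unfolding has_exponent_def by blast
  have DZ: "derived P (carrier P) \<subseteq> centre P (carrier P)" using assms(4) unfolding nilpotent_class_2_def by blast
  have P1: "\<exists>Q A. subgroup Q P \<and> subgroup A P \<and>
            centre P Q = derived P Q \<and> derived P Q = derived P (carrier P) \<and>
            A \<subseteq> centre P (carrier P) \<and> internal_direct_product P Q A"
    by (rule part1[OF assms(1) fin ex DZ])
  then obtain Q0 A0 where Q0: "subgroup Q0 P" "subgroup A0 P" "centre P Q0 = derived P Q0"
     "derived P Q0 = derived P (carrier P)" "A0 \<subseteq> centre P (carrier P)" "internal_direct_product P Q0 A0"
    by blast
  show ?thesis
  proof (rule conjI[OF P1], intro allI impI)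
    fix Q R
    assume H: "subgroup Q P \<and> subgroup R P \<and>
            centre P Q = derived P Q \<and> derived P Q = derived P (carrier P) \<and>
            derived P (carrier P) = derived P R \<and> derived P R = centre P R \<and>
            Q <#>\<^bsub>P\<^esub> centre P (carrier P) = carrier P \<and>
            R <#>\<^bsub>P\<^esub> centre P (carrier P) = carrier P"
    have f1: "\<forall>A. subgroup A P \<and> A \<subseteq> centre P (carrier P) \<and> internal_direct_product P Q A
                     \<longrightarrow> internal_direct_product P R A"
      using part2[of Q R] H by blast
    have "internal_direct_product P Q A0"
      using part2[of Q0 Q A0] H Q0 by auto
    hence f2: "\<exists>\<phi>. upper_central_aut P \<phi> \<and> \<phi> ` Q = R \<and> (\<forall>z \<in> centre P (carrier P). \<phi> z = z)"
      using part2[of Q R A0] H Q0 by blast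
    show "(\<forall>A. subgroup A P \<and> A \<subseteq> centre P (carrier P) \<and> internal_direct_product P Q A
                     \<longrightarrow> internal_direct_product P R A)
            \<and> (\<exists>\<phi>. upper_central_aut P \<phi> \<and> \<phi> ` Q = R \<and>
                    (\<forall>z \<in> centre P (carrier P). \<phi> z = z))" using f1 f2 by (rule conjI)
  qed
qed

end
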